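(* For $\Gamma\in G(n,\tfrac12)$, the right-angled Coxeter group $W_\Gamma$ is asymptotically almost surely strongly algebraically thick; equivalently $\mathbb P(\Gamma\in\mathcal T)\to1$ as $n\to\infty$.
   Context: $G(n,p)$: random simplicial graphs on $n$ labelled vertices with each edge present independently with probability $p$. $W_\Gamma$ is the right-angled Coxeter group of $\Gamma$. $\mathcal T$ is the smallest class of finite simplicial graphs containing $K_{2,2}$, closed under adding a new vertex adjacent exactly to the vertices of an induced subgraph which is not a clique, and closed under gluing two members along a common induced subgraph which is not a clique (optionally adding edges between the two non-shared parts). A right-angled Coxeter group $W_\Gamma$ is strongly algebraically thick iff $\Gamma\in\mathcal T$; strongly algebraically thick means: order $0$ = wide (no cut points in asymptotic cones), order $\le n$ = algebraic network (finite collection of subgroups of order $\le n-1$, generating a finite-index subgroup, chained through infinite intersections with path-connected $C$-neighborhoods, each quasiconvex via $(C,C)$-quasigeodesics). *)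

theory Defs
  imports "HOL-Probability.Probability"
begin

text \<open>Finite simplicial graphs with vertices in nat: a vertex set and a set of
  edges, each edge a 2-element set of vertices.\<close>
type_synonym graph = "nat set \<times> nat set set"

definition wf_graph :: "graph \<Rightarrow> bool" where
  "wf_graph G \<longleftrightarrow> finite (fst G) \<and>
     (\<forall>e\<in>snd G. \<exists>u v. u \<in> fst G \<and> v \<in> fst G \<and> u \<noteq> v \<and> e = {u, v})"

definition is_clique :: "nat set set \<Rightarrow> nat set \<Rightarrow> bool" where
  "is_clique E S \<longleftrightarrow> (\<forall>u\<in>S. \<forall>v\<in>S. u \<noteq> v \<longrightarrow> {u, v} \<in> E)"

definition induced_edges :: "nat set set \<Rightarrow> nat set \<Rightarrow> nat set set" where
  "induced_edges E S = {e \<in> E. e \<subseteq> S}"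

definition K22 :: graph where
  "K22 = ({0, 1, 2, 3}, {{0, 1}, {1, 2}, {2, 3}, {3, 0}})"

inductive_set thick_class :: "graph set" where
  base: "K22 \<in> thick_class"
| iso: "(V, E) \<in> thick_class \<Longrightarrow> inj_on f V \<Longrightarrow>
        (f ` V, (\<lambda>e. f ` e) ` E) \<in> thick_class"
| cone: "(V, E) \<in> thick_class \<Longrightarrow> v \<notin> V \<Longrightarrow> S \<subseteq> V \<Longrightarrow> \<not> is_clique E S \<Longrightarrow>
        (insert v V, E \<union> {{v, s} | s. s \<in> S}) \<in> thick_class"
| glue: "(V1, E1) \<in> thick_class \<Longrightarrow> (V2, E2) \<in> thick_class \<Longrightarrow>
        C = V1 \<inter> V2 \<Longrightarrow> induced_edges E1 C = induced_edges E2 C \<Longrightarrow>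
        \<not> is_clique E1 C \<Longrightarrow>
        F \<subseteq> {{u, w} | u w. u \<in> V1 - C \<and> w \<in> V2 - C} \<Longrightarrow>
        (V1 \<union> V2, E1 \<union> E2 \<union> F) \<in> thick_class"

definition all_edges :: "nat \<Rightarrow> nat set set" where
  "all_edges n = {{u, v} | u v. u < v \<and> v < n}"

definition Gnp :: "nat \<Rightarrow> real \<Rightarrow> nat set set pmf" where
  "Gnp n p = map_pmf (\<lambda>f. {e \<in> all_edges n. f e})
               (Pi_pmf (all_edges n) False (\<lambda>_. bernoulli_pmf p))"

end

theory Submission
  imports Defs "HOL-Real_Asymp.Real_Asymp"
begin


lemma prob_pair_times:
  "measure_pmf.prob (pair_pmf M N) (A \<times> B) = measure_pmf.prob M A * measure_pmf.prob N B"
proof -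
  have "measure_pmf.prob (pair_pmf M N) (A \<times> B) = measure_pmf.prob (pair_pmf M N) ((A \<times> B) \<inter> set_pmf (pair_pmf M N))"
    by (rule measure_Int_set_pmf[symmetric])
  also have "(A \<times> B) \<inter> set_pmf (pair_pmf M N) = (A \<inter> set_pmf M) \<times> (B \<inter> set_pmf N)" by auto
  also have "measure_pmf.prob (pair_pmf M N) \<dots> = measure_pmf.prob M (A \<inter> set_pmf M) * measure_pmf.prob N (B \<inter> set_pmf N)"
    by (rule measure_pmf_prob_product) auto
  finally show ?thesis by (simp add: measure_Int_set_pmf)
qed

lemma indep2:
  fixes p :: "'a \<Rightarrow> 'b pmf" and Q R :: "('a \<Rightarrow> 'b) \<Rightarrow> bool"
  assumes fin: "finite I" and AI: "A \<subseteq> I"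
    and Q: "\<And>f g. (\<forall>x\<in>A. f x = g x) \<Longrightarrow> Q f = Q g"
    and R: "\<And>f g. (\<forall>x\<in>I-A. f x = g x) \<Longrightarrow> R f = R g"
  shows "measure_pmf.prob (Pi_pmf I d p) {f. Q f \<and> R f} =
         measure_pmf.prob (Pi_pmf I d p) {f. Q f} * measure_pmf.prob (Pi_pmf I d p) {f. R f}"
proof -
  define h :: "('a \<Rightarrow> 'b) \<times> ('a \<Rightarrow> 'b) \<Rightarrow> 'a \<Rightarrow> 'b" where "h = (\<lambda>(f,g) x. if x \<in> A then f x else g x)"
  define P where "P = pair_pmf (Pi_pmf A d p) (Pi_pmf (I - A) d p)"
  have fA: "finite A" using fin AI finite_subset by blast
  have eq: "Pi_pmf I d p = map_pmf h P"
  proof -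
    have "I = A \<union> (I - A)" using AI by blast
    then have "Pi_pmf I d p = Pi_pmf (A \<union> (I - A)) d p" by simp
    also have "\<dots> = map_pmf h P" unfolding h_def P_def
      by (rule Pi_pmf_union) (use fA fin in auto)
    finally show ?thesis .
  qed
  have hQ: "Q (h (f, g)) = Q f" for f g by (rule Q) (auto simp: h_def)
  have hR: "R (h (f, g)) = R g" for f g by (rule R) (auto simp: h_def)
  have 1: "h -` {f. Q f \<and> R f} = {f. Q f} \<times> {g. R g}" by (auto simp: hQ hR)
  have 2: "h -` {f. Q f} = {f. Q f} \<times> UNIV" by (auto simp: hQ)
  have 3: "h -` {f. R f} = UNIV \<times> {g. R g}" by (auto simp: hR)
  show ?thesis unfolding eq measure_map_pmf 1 2 3 P_def prob_pair_times by simp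
qed



definition ind :: "nat set set \<Rightarrow> nat set \<Rightarrow> nat set set" where
  "ind E B = induced_edges E B"

lemma cone_step:
  assumes wf: "\<forall>e\<in>E. \<exists>u v. u \<noteq> v \<and> e = {u, v}"
    and B: "(B, induced_edges E B) \<in> thick_class" and v: "v \<notin> B"
    and nc: "\<not> is_clique E {s\<in>B. {v, s} \<in> E}"
  shows "(insert v B, induced_edges E (insert v B)) \<in> thick_class"
proof -
  let ?S = "{s\<in>B. {v, s} \<in> E}"
  have nc': "\<not> is_clique (induced_edges E B) ?S"
    using nc unfolding is_clique_def induced_edges_def by auto
  have "(insert v B, induced_edges E B \<union> {{v, s} | s. s \<in> ?S}) \<in> thick_class"
    by (rule thick_class.cone[OF B v _ nc']) auto
  moreover have "induced_edges E B \<union> {{v, s} | s. s \<in> ?S} = induced_edges E (insert v B)"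
  proof
    show "induced_edges E B \<union> {{v, s} |s. s \<in> ?S} \<subseteq> induced_edges E (insert v B)"
      unfolding induced_edges_def by auto
    show "induced_edges E (insert v B) \<subseteq> induced_edges E B \<union> {{v, s} |s. s \<in> ?S}"
    proof
      fix e assume e: "e \<in> induced_edges E (insert v B)"
      then have eE: "e \<in> E" and es: "e \<subseteq> insert v B" unfolding induced_edges_def by auto
      obtain x y where xy: "x \<noteq> y" "e = {x, y}" using wf eE by blast
      show "e \<in> induced_edges E B \<union> {{v, s} |s. s \<in> ?S}"
      proof (cases "v \<in> e")
        case False then show ?thesis using es eE unfolding induced_edges_def by auto
      next
        case True
        then have "x = v \<or> y = v" using xy by auto
        then show ?thesis
        proof
          assume "x = v" then show ?thesis using xy es eE v by auto
        next
          assume "y = v" then have "e = {v, x}" using xy by auto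
          then show ?thesis using xy es eE v by auto
        qed
      qed
    qed
  qed
  ultimately show ?thesis by simp
qed

lemma closure:
  assumes wf: "\<forall>e\<in>E. \<exists>u v. u \<noteq> v \<and> e = {u, v}"
    and finV: "finite V"
    and ac: "a \<noteq> c" "{a, c} \<notin> E"
    and ext: "\<And>v. v \<in> V \<Longrightarrow> v \<noteq> a \<Longrightarrow> v \<noteq> c \<Longrightarrow> \<exists>w1 w2. w1 \<in> V \<and> w2 \<in> V \<and> w1 \<noteq> w2 \<and>
       w1 \<notin> {a, c, v} \<and> w2 \<notin> {a, c, v} \<and> {a, w1} \<in> E \<and> {c, w1} \<in> E \<and> {v, w1} \<in> E \<and>
       {a, w2} \<in> E \<and> {c, w2} \<in> E \<and> {v, w2} \<in> E \<and> {w1, w2} \<notin> E"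
  shows "a \<in> B \<Longrightarrow> c \<in> B \<Longrightarrow> B \<subseteq> V \<Longrightarrow> (B, induced_edges E B) \<in> thick_class \<Longrightarrow>
     (V, induced_edges E V) \<in> thick_class"
proof (induction "card (V - B)" arbitrary: B rule: less_induct)
  case less
  show ?case
  proof (cases "B = V")
    case True then show ?thesis using less by simp
  next
    case False
    then obtain v where vV: "v \<in> V" "v \<notin> B" using less.prems by blast
    then have vac: "v \<noteq> a" "v \<noteq> c" using less.prems by auto
    obtain w1 w2 where w: "w1 \<in> V \<and> w2 \<in> V \<and> w1 \<noteq> w2 \<and>
       w1 \<notin> {a, c, v} \<and> w2 \<notin> {a, c, v} \<and> {a, w1} \<in> E \<and> {c, w1} \<in> E \<and> {v, w1} \<in> E \<and>
       {a, w2} \<in> E \<and> {c, w2} \<in> E \<and> {v, w2} \<in> E \<and> {w1, w2} \<notin> E"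
      using ext[OF vV(1) vac] by blast
    have ncl_ac: "\<not> is_clique E {s\<in>B. {u, s} \<in> E}" if "{u, a} \<in> E" "{u, c} \<in> E" for u
      using that ac less.prems(1,2) unfolding is_clique_def by (auto simp: insert_commute)
    have "\<exists>u. u \<in> V \<and> u \<notin> B \<and> \<not> is_clique E {s\<in>B. {u, s} \<in> E}"
    proof (cases "w1 \<in> B")
      case False then show ?thesis using w ncl_ac[of w1] by (auto simp: insert_commute)
    next
      case True
      show ?thesis
      proof (cases "w2 \<in> B")
        case False then show ?thesis using w ncl_ac[of w2] by (auto simp: insert_commute)
      next
        case True2: True
        have "\<not> is_clique E {s\<in>B. {v, s} \<in> E}"
          using True True2 w unfolding is_clique_def by blast
        then show ?thesis using vV by blast
      qed
    qed
    then obtain u where u: "u \<in> V" "u \<notin> B" "\<not> is_clique E {s\<in>B. {u, s} \<in> E}" by blast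
    have st: "(insert u B, induced_edges E (insert u B)) \<in> thick_class"
      by (rule cone_step[OF wf less.prems(4) u(2,3)])
    have "card (V - insert u B) < card (V - B)"
      using u finV by (metis Diff_insert Diff_iff card_Diff1_less finite_Diff)
    then show ?thesis using less.hyps[OF _ _ _ _ st] less.prems u by auto
  qed
qed



lemma all_edges_iff: "{u, v} \<in> all_edges n \<longleftrightarrow> u \<noteq> v \<and> u < n \<and> v < n"
proof
  assume "{u, v} \<in> all_edges n"
  then obtain a b where "{u, v} = {a, b}" "a < b" "b < n" unfolding all_edges_def by blast
  then show "u \<noteq> v \<and> u < n \<and> v < n" by (metis doubleton_eq_iff less_trans nat_neq_iff)
next
  assume "u \<noteq> v \<and> u < n \<and> v < n"
  then have h: "u < n" "v < n" "u \<noteq> v" by auto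
  show "{u, v} \<in> all_edges n"
  proof (cases "u < v")
    case True then show ?thesis using h unfolding all_edges_def by blast
  next
    case False then have "v < u" using h by simp
    moreover have "{u, v} = {v, u}" by auto
    ultimately show ?thesis using h unfolding all_edges_def by blast
  qed
qed

lemma all_edges_wf: "e \<in> all_edges n \<Longrightarrow> \<exists>u v. u \<noteq> v \<and> e = {u, v}"
  unfolding all_edges_def by (blast dest: less_imp_neq)

definition c4pat :: "(nat set \<Rightarrow> bool) \<Rightarrow> nat \<Rightarrow> bool" where
  "c4pat f i \<longleftrightarrow> f {4*i, 4*i+1} \<and> f {4*i+1, 4*i+2} \<and> f {4*i+2, 4*i+3} \<and> f {4*i+3, 4*i}
     \<and> \<not> f {4*i, 4*i+2} \<and> \<not> f {4*i+1, 4*i+3}"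

definition extpat :: "(nat set \<Rightarrow> bool) \<Rightarrow> nat \<Rightarrow> nat \<Rightarrow> nat \<Rightarrow> nat \<Rightarrow> bool" where
  "extpat f x y v j \<longleftrightarrow> f {x, 2*j} \<and> f {y, 2*j} \<and> f {v, 2*j} \<and> f {x, 2*j+1} \<and> f {y, 2*j+1}
     \<and> f {v, 2*j+1} \<and> \<not> f {2*j, 2*j+1}"

definition Jset :: "nat \<Rightarrow> nat \<Rightarrow> nat \<Rightarrow> nat \<Rightarrow> nat set" where
  "Jset n x y v = {j. 2*j+1 < n \<and> 2*j \<notin> {x,y,v} \<and> 2*j+1 \<notin> {x,y,v}}"

definition good :: "nat \<Rightarrow> (nat set \<Rightarrow> bool) \<Rightarrow> bool" where
  "good n f \<longleftrightarrow> (\<exists>i. 4*i+3 < n \<and> c4pat f i) \<and>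
     (\<forall>x<n. \<forall>y<n. \<forall>v<n. x \<noteq> y \<and> x \<noteq> v \<and> y \<noteq> v \<longrightarrow> (\<exists>j\<in>Jset n x y v. extpat f x y v j))"

lemma base_c4:
  assumes c: "c4pat f i" and i: "4*i+3 < n"
  defines "E \<equiv> {e\<in>all_edges n. f e}"
  shows "({4*i, 4*i+1, 4*i+2, 4*i+3}, induced_edges E {4*i, 4*i+1, 4*i+2, 4*i+3}) \<in> thick_class"
proof -
  define g where "g = (\<lambda>k::nat. 4*i+k)"
  have "(g ` {0,1,2,3}, (\<lambda>e. g ` e) ` {{0, 1}, {1, 2}, {2, 3}, {3, 0}}) \<in> thick_class"
    by (rule thick_class.iso[OF thick_class.base[unfolded K22_def]]) (auto simp: g_def)
  moreover have "g ` {0,1,2,3} = {4*i, 4*i+1, 4*i+2, 4*i+3}" by (simp add: g_def)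
  moreover have "(\<lambda>e. g ` e) ` {{0, 1}, {1, 2}, {2, 3}, {3, 0}} =
      induced_edges E {4*i, 4*i+1, 4*i+2, 4*i+3}" (is "?L = ?R")
  proof
    show "?L \<subseteq> ?R" using c i unfolding g_def induced_edges_def E_def c4pat_def
      by (auto simp: all_edges_iff)
    show "?R \<subseteq> ?L"
    proof
      fix e assume "e \<in> ?R"
      then have e: "e \<in> all_edges n" "f e" "e \<subseteq> {4*i, 4*i+1, 4*i+2, 4*i+3}"
        unfolding induced_edges_def E_def by auto
      obtain u v where uv: "u < v" "v < n" "e = {u, v}" using e(1) unfolding all_edges_def by auto
      have "u \<in> {4*i, 4*i+1, 4*i+2, 4*i+3}" "v \<in> {4*i, 4*i+1, 4*i+2, 4*i+3}" using e(3) uv by auto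
      then show "e \<in> ?L" using uv c e(2) unfolding c4pat_def g_def
        by (auto simp: insert_commute)
    qed
  qed
  ultimately show ?thesis by simp
qed

lemma good_thick:
  assumes "good n f"
  shows "({0..<n}, {e\<in>all_edges n. f e}) \<in> thick_class"
proof -
  define E where "E = {e\<in>all_edges n. f e}"
  obtain i where i: "4*i+3 < n" "c4pat f i" using assms unfolding good_def by blast
  have ext: "\<forall>x<n. \<forall>y<n. \<forall>v<n. x \<noteq> y \<and> x \<noteq> v \<and> y \<noteq> v \<longrightarrow> (\<exists>j\<in>Jset n x y v. extpat f x y v j)"
    using assms unfolding good_def by blast
  let ?a = "4*i" and ?c = "4*i+2"
  have wf: "\<forall>e\<in>E. \<exists>u v. u \<noteq> v \<and> e = {u, v}" unfolding E_def using all_edges_wf by blast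
  have ac: "?a \<noteq> ?c" "{?a, ?c} \<notin> E" using i unfolding E_def c4pat_def by auto
  have sub: "e \<subseteq> {0..<n}" if "e \<in> all_edges n" for e
    using that unfolding all_edges_def by auto
  have indV: "induced_edges E {0..<n} = E"
    unfolding induced_edges_def E_def using sub by blast
  have "({0..<n}, induced_edges E {0..<n}) \<in> thick_class"
  proof (rule closure[OF wf _ ac, where B="{4*i, 4*i+1, 4*i+2, 4*i+3}"])
    show "finite {0..<n}" by simp
    show "?a \<in> {4*i, 4*i+1, 4*i+2, 4*i+3}" "?c \<in> {4*i, 4*i+1, 4*i+2, 4*i+3}" by auto
    show "{4*i, 4*i+1, 4*i+2, 4*i+3} \<subseteq> {0..<n}" using i by auto
    show "({4*i, 4*i+1, 4*i+2, 4*i+3}, induced_edges E {4*i, 4*i+1, 4*i+2, 4*i+3}) \<in> thick_class"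
      unfolding E_def by (rule base_c4[OF i(2,1)])
  next
    fix v assume v: "v \<in> {0..<n}" "v \<noteq> ?a" "v \<noteq> ?c"
    obtain j where j: "j \<in> Jset n ?a ?c v" "extpat f ?a ?c v j"
    proof -
      have "?a < n" "?c < n" "v < n" using i v by auto
      moreover have "?a \<noteq> ?c" "?a \<noteq> v" "?c \<noteq> v" using v by auto
      ultimately have "\<exists>j\<in>Jset n ?a ?c v. extpat f ?a ?c v j" using ext by simp
      then show ?thesis using that by blast
    qed
    show "\<exists>w1 w2. w1 \<in> {0..<n} \<and> w2 \<in> {0..<n} \<and> w1 \<noteq> w2 \<and>
       w1 \<notin> {?a, ?c, v} \<and> w2 \<notin> {?a, ?c, v} \<and> {?a, w1} \<in> E \<and> {?c, w1} \<in> E \<and> {v, w1} \<in> E \<and>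
       {?a, w2} \<in> E \<and> {?c, w2} \<in> E \<and> {v, w2} \<in> E \<and> {w1, w2} \<notin> E"
    proof -
      have jj: "2*j+1 < n" "2*j \<notin> {?a, ?c, v}" "2*j+1 \<notin> {?a, ?c, v}" using j(1) unfolding Jset_def by auto
      have vn: "v < n" "?a < n" "?c < n" using v i by auto
      have ex: "f {?a, 2*j}" "f {?c, 2*j}" "f {v, 2*j}" "f {?a, 2*j+1}" "f {?c, 2*j+1}"
        "f {v, 2*j+1}" "\<not> f {2*j, 2*j+1}" using j(2) unfolding extpat_def by auto
      have m: "{x, y} \<in> E" if "f {x, y}" "x < n" "y < n" "x \<noteq> y" for x y
        using that unfolding E_def by (simp add: all_edges_iff)
      have nm: "{2*j, 2*j+1} \<notin> E" using ex(7) unfolding E_def by simp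
      have d: "?a \<noteq> 2*j" "?c \<noteq> 2*j" "v \<noteq> 2*j" "?a \<noteq> 2*j+1" "?c \<noteq> 2*j+1" "v \<noteq> 2*j+1"
        using jj by auto
      have n2: "2*j < n" using jj by simp
      have e1: "{?a, 2*j} \<in> E" by (rule m[OF ex(1) vn(2) n2 d(1)])
      have e2: "{?c, 2*j} \<in> E" by (rule m[OF ex(2) vn(3) n2 d(2)])
      have e3: "{v, 2*j} \<in> E" by (rule m[OF ex(3) vn(1) n2 d(3)])
      have e4: "{?a, 2*j+1} \<in> E" by (rule m[OF ex(4) vn(2) jj(1) d(4)])
      have e5: "{?c, 2*j+1} \<in> E" by (rule m[OF ex(5) vn(3) jj(1) d(5)])
      have e6: "{v, 2*j+1} \<in> E" by (rule m[OF ex(6) vn(1) jj(1) d(6)])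
      show ?thesis
        apply (rule exI[of _ "2*j"], rule exI[of _ "2*j+1"])
        using jj n2 nm e1 e2 e3 e4 e5 e6 by (simp only: atLeastLessThan_iff zero_le simp_thms)
    qed
  qed
  then show ?thesis using indV E_def by simp
qed



lemma prob_pattern:
  assumes fin: "finite I" and SI: "S \<subseteq> I"
  shows "measure_pmf.prob (Pi_pmf I d (\<lambda>_. bernoulli_pmf (1/2))) {f. \<forall>e\<in>S. f e = b e} = (1/2) ^ card S"
proof -
  define B where "B = (\<lambda>x. if x \<in> S then {b x} else (UNIV :: bool set))"
  have "{f. \<forall>e\<in>S. f e = b e} = Pi I B" using SI unfolding B_def Pi_def by auto
  then have "measure_pmf.prob (Pi_pmf I d (\<lambda>_. bernoulli_pmf (1/2))) {f. \<forall>e\<in>S. f e = b e}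
      = (\<Prod>x\<in>I. measure_pmf.prob (bernoulli_pmf (1/2)) (B x))"
    using measure_Pi_pmf_Pi[OF fin] by simp
  also have "\<dots> = (\<Prod>x\<in>I. if x \<in> S then 1/2 else 1)"
    by (rule prod.cong) (auto simp: B_def measure_pmf_single)
  also have "\<dots> = (1/2) ^ card S"
    using fin SI by (simp add: prod.If_cases Int_absorb1 Int_absorb2)
  finally show ?thesis .
qed

lemma prob_blocks:
  assumes fin: "finite I" and finJ: "finite J"
    and SI: "\<And>j. j \<in> J \<Longrightarrow> S j \<subseteq> I"
    and disj: "\<And>j j'. j \<in> J \<Longrightarrow> j' \<in> J \<Longrightarrow> j \<noteq> j' \<Longrightarrow> S j \<inter> S j' = {}"
  shows "measure_pmf.prob (Pi_pmf I d (\<lambda>_. bernoulli_pmf (1/2)))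
           {f. \<forall>j\<in>J. \<not> (\<forall>e\<in>S j. f e = b j e)} = (\<Prod>j\<in>J. 1 - (1/2) ^ card (S j))"
  using finJ SI disj
proof (induction J rule: finite_induct)
  case empty then show ?case by simp
next
  case (insert j J)
  let ?M = "Pi_pmf I d (\<lambda>_. bernoulli_pmf (1/2))"
  let ?Q = "\<lambda>f. \<not> (\<forall>e\<in>S j. f e = b j e)"
  let ?R = "\<lambda>f. \<forall>j\<in>J. \<not> (\<forall>e\<in>S j. f e = b j e)"
  have Sj: "S j \<subseteq> I" using insert by auto
  have eq: "{f. \<forall>j'\<in>insert j J. \<not> (\<forall>e\<in>S j'. f e = b j' e)} = {f. ?Q f \<and> ?R f}" by auto
  have "measure_pmf.prob ?M {f. ?Q f \<and> ?R f} = measure_pmf.prob ?M {f. ?Q f} * measure_pmf.prob ?M {f. ?R f}"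
  proof (rule indep2[OF fin Sj])
    show "?Q f = ?Q g" if "\<forall>x\<in>S j. f x = g x" for f g using that by auto
    show "?R f = ?R g" if h: "\<forall>x\<in>I - S j. f x = g x" for f g
    proof -
      have "\<forall>j'\<in>J. \<forall>e\<in>S j'. f e = g e"
      proof (intro ballI)
        fix j' e assume "j' \<in> J" "e \<in> S j'"
        moreover have "S j \<inter> S j' = {}" using insert.prems(2)[of j j'] insert.hyps \<open>j' \<in> J\<close> by auto
        ultimately show "f e = g e" using h insert.prems(1)[of j'] by auto
      qed
      then show ?thesis by auto
    qed
  qed
  moreover have "measure_pmf.prob ?M {f. ?Q f} = 1 - (1/2) ^ card (S j)"
  proof -
    have "{f. ?Q f} = UNIV - {f. \<forall>e\<in>S j. f e = b j e}" by auto
    then show ?thesis using measure_pmf.prob_compl[of "{f. \<forall>e\<in>S j. f e = b j e}" ?M]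
        prob_pattern[OF fin Sj] by simp
  qed
  moreover have "measure_pmf.prob ?M {f. ?R f} = (\<Prod>j\<in>J. 1 - (1/2) ^ card (S j))"
    using insert by auto
  ultimately show ?case using eq insert.hyps by simp
qed



abbreviation M :: "nat \<Rightarrow> (nat set \<Rightarrow> bool) pmf" where
  "M n \<equiv> Pi_pmf (all_edges n) False (\<lambda>_. bernoulli_pmf (1/2))"

lemma finite_all_edges: "finite (all_edges n)"
proof -
  have "all_edges n \<subseteq> (\<lambda>(u,v). {u,v}) ` ({..<n} \<times> {..<n})" unfolding all_edges_def by auto
  then show ?thesis by (rule finite_subset) auto
qed

lemma prod_bound:
  fixes q :: real
  assumes "finite J" "\<And>j. j \<in> J \<Longrightarrow> card (S j) \<le> k" "k' \<le> card J"
  shows "(\<Prod>j\<in>J. 1 - (1/2::real) ^ card (S j)) \<le> (1 - (1/2)^k) ^ k'"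
proof -
  have "(\<Prod>j\<in>J. 1 - (1/2::real) ^ card (S j)) \<le> (\<Prod>j\<in>J. 1 - (1/2::real)^k)"
  proof (rule prod_mono)
    fix j assume "j \<in> J"
    then have "(1/2::real)^k \<le> (1/2)^card (S j)" using assms(2) by (intro power_decreasing) auto
    moreover have "(1/2::real)^card (S j) \<le> 1" by (simp add: power_le_one)
    ultimately show "0 \<le> 1 - (1/2::real) ^ card (S j) \<and> 1 - (1/2::real) ^ card (S j) \<le> 1 - (1/2)^k" by simp
  qed
  also have "\<dots> = (1 - (1/2)^k) ^ card J" by simp
  also have "\<dots> \<le> (1 - (1/2::real)^k) ^ k'"
    by (rule power_decreasing[OF assms(3)]) (auto simp: power_le_one)
  finally show ?thesis .
qed

definition Sc :: "nat \<Rightarrow> nat set set" where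
  "Sc i = set [{4*i,4*i+1},{4*i+1,4*i+2},{4*i+2,4*i+3},{4*i+3,4*i},{4*i,4*i+2},{4*i+1,4*i+3}]"

lemma c4_fail: "measure_pmf.prob (M n) {f. \<not> (\<exists>i. 4*i+3 < n \<and> c4pat f i)} \<le> (63/64) ^ (n div 4)"
proof -
  define b :: "nat \<Rightarrow> nat set \<Rightarrow> bool" where "b = (\<lambda>i e. e \<noteq> {4*i,4*i+2} \<and> e \<noteq> {4*i+1,4*i+3})"
  have sub: "{f. \<not> (\<exists>i. 4*i+3 < n \<and> c4pat f i)} \<subseteq> {f. \<forall>j\<in>{..<n div 4}. \<not> (\<forall>e\<in>Sc j. f e = b j e)}"
  proof (rule subsetI, simp only: mem_Collect_eq, intro ballI notI)
    fix f j assume h: "\<not> (\<exists>i. 4*i+3 < n \<and> c4pat f i)" "j \<in> {..<n div 4}" "\<forall>e\<in>Sc j. f e = b j e"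
    have "4*j+3 < n" using h(2) by auto
    moreover have "c4pat f j" using h(3) unfolding Sc_def b_def c4pat_def
      by (simp add: doubleton_eq_iff)
    ultimately show False using h(1) by blast
  qed
  have SI: "Sc j \<subseteq> all_edges n" if "j \<in> {..<n div 4}" for j
    using that unfolding Sc_def by (auto simp: all_edges_iff)
  have dv: "x div 4 = i" if "e \<in> Sc i" "x \<in> e" for e x i
    using that unfolding Sc_def by auto
  have ne: "e \<noteq> {}" if "e \<in> Sc i" for e i using that unfolding Sc_def by auto
  have disj: "Sc j \<inter> Sc j' = {}" if "j \<noteq> j'" for j j'
  proof (rule ccontr)
    assume "Sc j \<inter> Sc j' \<noteq> {}"
    then obtain e where e: "e \<in> Sc j" "e \<in> Sc j'" by blast
    then obtain x where "x \<in> e" using ne by blast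
    then show False using dv[OF e(1)] dv[OF e(2)] that by auto
  qed
  have "measure_pmf.prob (M n) {f. \<not> (\<exists>i. 4*i+3 < n \<and> c4pat f i)}
     \<le> measure_pmf.prob (M n) {f. \<forall>j\<in>{..<n div 4}. \<not> (\<forall>e\<in>Sc j. f e = b j e)}"
    by (rule measure_pmf.finite_measure_mono[OF sub]) simp
  also have "\<dots> = (\<Prod>j\<in>{..<n div 4}. 1 - (1/2) ^ card (Sc j))"
    by (rule prob_blocks[OF finite_all_edges]) (use SI disj in auto)
  also have "\<dots> \<le> (1 - (1/2::real)^6) ^ (n div 4)"
  proof (rule prod_bound)
    show "card (Sc j) \<le> 6" for j unfolding Sc_def by (rule order.trans[OF card_length]) simp
  qed auto
  also have "(1 - (1/2::real)^6) = 63/64" by (simp add: power_divide)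
  finally show ?thesis .
qed



definition Se :: "nat \<Rightarrow> nat \<Rightarrow> nat \<Rightarrow> nat \<Rightarrow> nat set set" where
  "Se x y v j = set [{x,2*j},{y,2*j},{v,2*j},{x,2*j+1},{y,2*j+1},{v,2*j+1},{2*j,2*j+1}]"

lemma finite_Jset: "finite (Jset n x y v)"
  unfolding Jset_def by (rule finite_subset[of _ "{..<n}"]) auto

lemma card_Jset:
  "n div 2 - 3 \<le> card (Jset n x y v)"
proof -
  have "{..<n div 2} - {x div 2, y div 2, v div 2} \<subseteq> Jset n x y v"
    unfolding Jset_def by auto
  then have "card ({..<n div 2} - {x div 2, y div 2, v div 2}) \<le> card (Jset n x y v)"
    by (rule card_mono[OF finite_Jset])
  moreover have "card {..<n div 2} - card {x div 2, y div 2, v div 2} \<le> card ({..<n div 2} - {x div 2, y div 2, v div 2})"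
    by (rule diff_card_le_card_Diff) simp
  moreover have "card {x div 2, y div 2, v div 2} \<le> 3" using card_length[of "[x div 2, y div 2, v div 2]"] by simp
  ultimately show ?thesis unfolding card_lessThan by arith
qed

lemma ext_fail:
  assumes xyv: "x < n" "y < n" "v < n" "x \<noteq> y" "x \<noteq> v" "y \<noteq> v"
  shows "measure_pmf.prob (M n) {f. \<not> (\<exists>j\<in>Jset n x y v. extpat f x y v j)} \<le> (127/128) ^ (n div 2 - 3)"
proof -
  define b :: "nat \<Rightarrow> nat set \<Rightarrow> bool" where "b = (\<lambda>j e. e \<noteq> {2*j,2*j+1})"
  let ?J = "Jset n x y v"
  have fJ: "finite ?J" by (rule finite_Jset)
  have sub: "{f. \<not> (\<exists>j\<in>?J. extpat f x y v j)} \<subseteq> {f. \<forall>j\<in>?J. \<not> (\<forall>e\<in>Se x y v j. f e = b j e)}"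
  proof (rule subsetI, simp only: mem_Collect_eq, intro ballI notI)
    fix f j assume h: "\<not> (\<exists>j\<in>?J. extpat f x y v j)" "j \<in> ?J" "\<forall>e\<in>Se x y v j. f e = b j e"
    have jj: "x \<noteq> 2*j" "y \<noteq> 2*j" "v \<noteq> 2*j" "x \<noteq> 2*j+1" "y \<noteq> 2*j+1" "v \<noteq> 2*j+1"
      using h(2) unfolding Jset_def by auto
    have "extpat f x y v j" using h(3) jj unfolding Se_def b_def extpat_def
      by (simp add: doubleton_eq_iff)
    then show False using h(1,2) by blast
  qed
  have SI: "Se x y v j \<subseteq> all_edges n" if "j \<in> ?J" for j
  proof -
    have jj: "x \<noteq> 2*j" "y \<noteq> 2*j" "v \<noteq> 2*j" "x \<noteq> 2*j+1" "y \<noteq> 2*j+1" "v \<noteq> 2*j+1" "2*j+1 < n"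
      using that unfolding Jset_def by auto
    then show ?thesis using xyv unfolding Se_def by (auto simp: all_edges_iff)
  qed
  have P1: "\<forall>t\<in>e. t \<in> {x,y,v} \<or> t div 2 = j" if "e \<in> Se x y v j" for e j
    using that unfolding Se_def by auto
  have P2: "\<exists>t\<in>e. t \<notin> {x,y,v} \<and> t div 2 = j" if "e \<in> Se x y v j" "j \<in> ?J" for e j
  proof -
    have jj: "2*j \<notin> {x,y,v}" "2*j+1 \<notin> {x,y,v}" using that(2) unfolding Jset_def by auto
    show ?thesis using that(1) jj unfolding Se_def by auto
  qed
  have disj: "Se x y v j \<inter> Se x y v j' = {}" if jJ: "j \<in> ?J" "j' \<in> ?J" "j \<noteq> j'" for j j'
  proof (rule ccontr)
    assume "Se x y v j \<inter> Se x y v j' \<noteq> {}"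
    then obtain e where e: "e \<in> Se x y v j" "e \<in> Se x y v j'" by blast
    obtain t where t: "t \<in> e" "t \<notin> {x,y,v}" "t div 2 = j" using P2[OF e(1) jJ(1)] by blast
    have "t div 2 = j'" using P1[OF e(2)] t by blast
    then show False using t jJ by simp
  qed
  have "measure_pmf.prob (M n) {f. \<not> (\<exists>j\<in>?J. extpat f x y v j)}
     \<le> measure_pmf.prob (M n) {f. \<forall>j\<in>?J. \<not> (\<forall>e\<in>Se x y v j. f e = b j e)}"
    by (rule measure_pmf.finite_measure_mono[OF sub]) simp
  also have "\<dots> = (\<Prod>j\<in>?J. 1 - (1/2) ^ card (Se x y v j))"
    by (rule prob_blocks[OF finite_all_edges fJ]) (use SI disj in auto)
  also have "\<dots> \<le> (1 - (1/2::real)^7) ^ (n div 2 - 3)"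
  proof (rule prod_bound[OF fJ])
    show "card (Se x y v j) \<le> 7" for j unfolding Se_def by (rule order.trans[OF card_length]) simp
  qed (rule card_Jset)
  also have "(1 - (1/2::real)^7) = 127/128" by (simp add: power_divide)
  finally show ?thesis .
qed



lemma prob_good: "measure_pmf.prob (M n) {f. good n f} \<ge>
   1 - (63/64) ^ (n div 4) - real n ^ 3 * (127/128) ^ (n div 2 - 3)"
proof -
  define T where "T = {(x,y,v). x < n \<and> y < n \<and> v < n \<and> x \<noteq> y \<and> x \<noteq> v \<and> y \<noteq> v}"
  define F where "F = (\<lambda>(x,y,v). {f. \<not> (\<exists>j\<in>Jset n x y v. extpat f x y v j)})"
  have TT: "T \<subseteq> {..<n} \<times> {..<n} \<times> {..<n}" unfolding T_def by auto
  have fT: "finite T" using TT finite_subset by blast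
  have cT: "card T \<le> n ^ 3"
  proof -
    have "card T \<le> card ({..<n} \<times> {..<n} \<times> {..<n})" by (rule card_mono[OF _ TT]) simp
    then show ?thesis by (simp add: card_cartesian_product power3_eq_cube)
  qed
  have sub: "{f. \<not> good n f} \<subseteq> {f. \<not> (\<exists>i. 4*i+3 < n \<and> c4pat f i)} \<union> (\<Union>t\<in>T. F t)"
    unfolding good_def T_def F_def by auto
  have "measure_pmf.prob (M n) (\<Union>t\<in>T. F t) \<le> (\<Sum>t\<in>T. measure_pmf.prob (M n) (F t))"
    by (rule measure_pmf.finite_measure_subadditive_finite[OF fT]) simp
  also have "\<dots> \<le> (\<Sum>t\<in>T. (127/128) ^ (n div 2 - 3))"
  proof (rule sum_mono)
    fix t assume "t \<in> T"
    then obtain x y v where "t = (x,y,v)" "x < n" "y < n" "v < n" "x \<noteq> y" "x \<noteq> v" "y \<noteq> v"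
      unfolding T_def by auto
    then show "measure_pmf.prob (M n) (F t) \<le> (127/128) ^ (n div 2 - 3)"
      using ext_fail[of x n y v] unfolding F_def by simp
  qed
  also have "\<dots> = real (card T) * (127/128) ^ (n div 2 - 3)" by simp
  also have "\<dots> \<le> real n ^ 3 * (127/128) ^ (n div 2 - 3)"
    by (rule mult_right_mono) (use cT in \<open>simp_all add: of_nat_le_iff[symmetric]\<close>)
  finally have U: "measure_pmf.prob (M n) (\<Union>t\<in>T. F t) \<le> real n ^ 3 * (127/128) ^ (n div 2 - 3)" .
  have "measure_pmf.prob (M n) {f. \<not> good n f}
     \<le> measure_pmf.prob (M n) ({f. \<not> (\<exists>i. 4*i+3 < n \<and> c4pat f i)} \<union> (\<Union>t\<in>T. F t))"
    by (rule measure_pmf.finite_measure_mono[OF sub]) simp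
  also have "\<dots> \<le> measure_pmf.prob (M n) {f. \<not> (\<exists>i. 4*i+3 < n \<and> c4pat f i)} + measure_pmf.prob (M n) (\<Union>t\<in>T. F t)"
    by (rule measure_Un_le) simp_all
  also have "\<dots> \<le> (63/64) ^ (n div 4) + real n ^ 3 * (127/128) ^ (n div 2 - 3)"
    using c4_fail[of n] U by linarith
  finally have B: "measure_pmf.prob (M n) {f. \<not> good n f} \<le> (63/64) ^ (n div 4) + real n ^ 3 * (127/128) ^ (n div 2 - 3)" .
  have "{f. \<not> good n f} = UNIV - {f. good n f}" by auto
  then have "measure_pmf.prob (M n) {f. \<not> good n f} = 1 - measure_pmf.prob (M n) {f. good n f}"
    using measure_pmf.prob_compl[of "{f. good n f}" "M n"] by simp
  then show ?thesis using B by linarith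
qed

lemma pow_le_powr:
  fixes q :: real assumes "0 < q" "q \<le> 1" "r \<le> real k"
  shows "q ^ k \<le> q powr r"
proof -
  have "q ^ k = q powr real k" using assms by (simp add: powr_realpow)
  also have "\<dots> \<le> q powr r" by (rule powr_mono') (use assms in auto)
  finally show ?thesis .
qed

theorem theorem3p10:
  shows "(\<lambda>n. measure_pmf.prob (Gnp n (1/2)) {E. ({0..<n}, E) \<in> thick_class})
           \<longlonglongrightarrow> 1"
proof (rule tendsto_sandwich)
  define a where "a = (\<lambda>n::nat. (63/64::real) powr (real n / 4 - 1))"
  define b where "b = (\<lambda>n::nat. real n ^ 3 * (127/128::real) powr (real n / 2 - 4))"
  have a0: "a \<longlonglongrightarrow> 0" unfolding a_def by real_asymp
  have b0: "b \<longlonglongrightarrow> 0" unfolding b_def by real_asymp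
  have le: "1 - a n - b n \<le> measure_pmf.prob (Gnp n (1/2)) {E. ({0..<n}, E) \<in> thick_class}" for n
  proof -
    have eq: "measure_pmf.prob (Gnp n (1/2)) {E. ({0..<n}, E) \<in> thick_class} =
        measure_pmf.prob (M n) {f. ({0..<n}, {e\<in>all_edges n. f e}) \<in> thick_class}"
      unfolding Gnp_def by simp
    have "measure_pmf.prob (M n) {f. good n f} \<le> measure_pmf.prob (M n) {f. ({0..<n}, {e\<in>all_edges n. f e}) \<in> thick_class}"
      by (rule measure_pmf.finite_measure_mono) (auto intro: good_thick)
    moreover have "(63/64::real) ^ (n div 4) \<le> a n" unfolding a_def
      by (rule pow_le_powr) linarith+
    moreover have "real n / 2 - 4 \<le> real (n div 2 - 3)"
    proof (cases "3 \<le> n div 2")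
      case True
      have "real n = 2 * real (n div 2) + real (n mod 2)"
        by (metis div_mult_mod_eq of_nat_add of_nat_mult of_nat_numeral mult.commute)
      moreover have "real (n mod 2) \<le> 1" by simp
      ultimately show ?thesis using True by (simp add: of_nat_diff)
    next
      case False then have "n \<le> 5" by linarith
      then show ?thesis by simp
    qed
    then have "(127/128::real) ^ (n div 2 - 3) \<le> (127/128::real) powr (real n / 2 - 4)"
      by (intro pow_le_powr) simp_all
    then have "real n ^ 3 * (127/128::real) ^ (n div 2 - 3) \<le> b n" unfolding b_def
      by (rule mult_left_mono) simp
    ultimately show ?thesis using prob_good[of n] eq by linarith
  qed
  show "\<forall>\<^sub>F n in sequentially. 1 - a n - b n \<le> measure_pmf.prob (Gnp n (1/2)) {E. ({0..<n}, E) \<in> thick_class}"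
    using le by simp
  show "\<forall>\<^sub>F n in sequentially. measure_pmf.prob (Gnp n (1/2)) {E. ({0..<n}, E) \<in> thick_class} \<le> 1"
    by simp
  show "(\<lambda>n. 1 - a n - b n) \<longlonglongrightarrow> 1" using tendsto_diff[OF tendsto_diff[OF tendsto_const a0] b0] by simp
  show "(\<lambda>n. 1::real) \<longlonglongrightarrow> 1" by simp
qed


end
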